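(* Let $S$ be a supersymmetric numerical semigroup. Then the blowup semigroup of $S$ is symmetric.
   Context: $S$ is a numerical semigroup (a submonoid of $\mathbb N$ with finite complement) with minimal generators $e<a_1<\dots<a_t$. ${\rm ord}(n;S)$ is the maximum of $\sum c_i$ over $(c_0,\dots,c_t)\in\mathbb N^{t+1}$ with $c_0e+\sum c_ia_i=n$. $S$ is additive if ${\rm ord}(u+e;S)={\rm ord}(u;S)+1$ for all $u\in S$. With $\operatorname{Ap}(S;e)=\{w\in S:w-e\notin S\}=\{w_0<\dots<w_{e-1}\}$, $S$ is supersymmetric if $S$ is additive and, whenever $i+j=e-1$, both $w_i+w_j=w_{e-1}$ and ${\rm ord}(w_i;S)+{\rm ord}(w_j;S)={\rm ord}(w_{e-1};S)$ hold. The blowup is $B=\langle e,a_1-e,\dots,a_t-e\rangle$. A numerical semigroup $T$ with Frobenius number $F(T)$ (the largest integer not in $T$) is symmetric if, whenever $x+y=F(T)$ with $x,y\in\mathbb Z$, exactly one of $x,y$ is in $T$. *)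

theory Defs
  imports Main
begin

definition numerical_semigroup :: "nat set \<Rightarrow> bool" where
  "numerical_semigroup S \<longleftrightarrow> 0 \<in> S \<and> (\<forall>x\<in>S. \<forall>y\<in>S. x + y \<in> S) \<and> finite (UNIV - S)"

definition mingens :: "nat set \<Rightarrow> nat set" where
  "mingens S = {x \<in> S. x \<noteq> 0 \<and> \<not> (\<exists>y\<in>S. \<exists>z\<in>S. y \<noteq> 0 \<and> z \<noteq> 0 \<and> x = y + z)}"

text \<open>Multiplicity e: the smallest minimal generator (= smallest nonzero element).\<close>
definition mult :: "nat set \<Rightarrow> nat" where
  "mult S = Min (mingens S)"

definition ord_sg :: "nat \<Rightarrow> nat set \<Rightarrow> nat" where
  "ord_sg n S = Max {\<Sum>g\<in>mingens S. c g | c. (\<Sum>g\<in>mingens S. c g * g) = n}"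

definition additive :: "nat set \<Rightarrow> bool" where
  "additive S \<longleftrightarrow> (\<forall>u\<in>S. ord_sg (u + mult S) S = ord_sg u S + 1)"

definition apery :: "nat set \<Rightarrow> nat \<Rightarrow> nat set" where
  "apery S e = {w \<in> S. \<not> (e \<le> w \<and> w - e \<in> S)}"

text \<open>w_i: the i-th smallest element (0-based) of Ap(S;e).\<close>
definition apery_elt :: "nat set \<Rightarrow> nat \<Rightarrow> nat" where
  "apery_elt S i = sorted_list_of_set (apery S (mult S)) ! i"

definition supersymmetric :: "nat set \<Rightarrow> bool" where
  "supersymmetric S \<longleftrightarrow> additive S \<and>
     (\<forall>i j. i + j = mult S - 1 \<longrightarrow>
        apery_elt S i + apery_elt S j = apery_elt S (mult S - 1) \<and>
        ord_sg (apery_elt S i) S + ord_sg (apery_elt S j) S = ord_sg (apery_elt S (mult S - 1)) S)"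

inductive_set gen_monoid :: "nat set \<Rightarrow> nat set" for A where
  zero: "0 \<in> gen_monoid A"
| base: "a \<in> A \<Longrightarrow> a \<in> gen_monoid A"
| add: "x \<in> gen_monoid A \<Longrightarrow> y \<in> gen_monoid A \<Longrightarrow> x + y \<in> gen_monoid A"

definition blowup :: "nat set \<Rightarrow> nat set" where
  "blowup S = gen_monoid ({mult S} \<union> (\<lambda>a. a - mult S) ` (mingens S - {mult S}))"

definition frobenius :: "nat set \<Rightarrow> int" where
  "frobenius T = (if UNIV - T = {} then -1 else int (Max (UNIV - T)))"

definition int_mem :: "int \<Rightarrow> nat set \<Rightarrow> bool" where
  "int_mem x T \<longleftrightarrow> x \<ge> 0 \<and> nat x \<in> T"

definition symmetric_sg :: "nat set \<Rightarrow> bool" where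
  "symmetric_sg T \<longleftrightarrow> (\<forall>x y :: int. x + y = frobenius T \<longrightarrow> (int_mem x T \<longleftrightarrow> \<not> int_mem y T))"

end

theory Submission imports Defs begin

locale ns =
  fixes S :: "nat set"
  assumes ns: "numerical_semigroup S"
begin

lemma zero_in: "0 \<in> S" using ns by (simp add: numerical_semigroup_def)
lemma add_in: "x \<in> S \<Longrightarrow> y \<in> S \<Longrightarrow> x + y \<in> S" using ns by (simp add: numerical_semigroup_def)

lemma cofinite: "\<exists>N. \<forall>n\<ge>N. n \<in> S"
proof -
  have "finite (UNIV - S)" using ns by (simp add: numerical_semigroup_def)
  then obtain N where "\<forall>x\<in>UNIV - S. x < N" using finite_nat_set_iff_bounded by blast
  then show ?thesis by (metis DiffI UNIV_I not_le)
qed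

definition e0 where "e0 = (LEAST x. x \<in> S \<and> x \<noteq> 0)"

lemma ex_nz: "\<exists>x. x \<in> S \<and> x \<noteq> 0"
  using cofinite by (metis le_add2 add_is_0 one_neq_zero)

lemma e0_prop: "e0 \<in> S" "e0 \<noteq> 0"
  using LeastI_ex[OF ex_nz] unfolding e0_def by auto

lemma e0_le: "x \<in> S \<Longrightarrow> x \<noteq> 0 \<Longrightarrow> e0 \<le> x"
  unfolding e0_def by (simp add: Least_le)

lemma e0_M: "e0 \<in> mingens S"
proof -
  have "\<not> (\<exists>y\<in>S. \<exists>z\<in>S. y \<noteq> 0 \<and> z \<noteq> 0 \<and> e0 = y + z)"
  proof
    assume "\<exists>y\<in>S. \<exists>z\<in>S. y \<noteq> 0 \<and> z \<noteq> 0 \<and> e0 = y + z"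
    then obtain y z where "y \<in> S" "y \<noteq> 0" "z \<noteq> 0" "e0 = y + z" by blast
    then show False using e0_le[of y] by simp
  qed
  then show ?thesis using e0_prop unfolding mingens_def by blast
qed

lemma M_S: "mingens S \<subseteq> S" by (auto simp: mingens_def)
lemma M_nz: "g \<in> mingens S \<Longrightarrow> g \<noteq> 0" by (auto simp: mingens_def)

lemma M_finite: "finite (mingens S)"
proof -
  obtain N where N: "\<forall>n\<ge>N. n \<in> S" using cofinite by blast
  have "mingens S \<subseteq> {..N + e0}"
  proof
    fix g assume g: "g \<in> mingens S"
    show "g \<in> {..N + e0}"
    proof (cases "g = e0")
      case False
      have "e0 \<le> g" using g e0_le M_S M_nz by blast
      with False have "g - e0 \<noteq> 0" by simp
      have "g - e0 \<notin> S"
      proof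
        assume "g - e0 \<in> S"
        moreover have "g = e0 + (g - e0)" using \<open>e0 \<le> g\<close> by simp
        ultimately show False using g e0_prop \<open>g - e0 \<noteq> 0\<close> unfolding mingens_def by blast
      qed
      then have "g - e0 < N" using N not_le by blast
      then show ?thesis by simp
    qed simp
  qed
  then show ?thesis using finite_subset by blast
qed

lemma e_eq: "mult S = e0"
  unfolding mult_def
proof (rule Min_eqI[OF M_finite])
  fix y assume "y \<in> mingens S"
  then show "e0 \<le> y" using e0_le[of y] M_S M_nz[of y] by blast
qed (rule e0_M)

lemma e_pos: "mult S > 0" using e_eq e0_prop by simp
lemma e_M: "mult S \<in> mingens S" using e_eq e0_M by simp
lemma e_S: "mult S \<in> S" using e_eq e0_prop by simp
lemma e_le: "g \<in> mingens S \<Longrightarrow> mult S \<le> g" using e_eq e0_le[of g] M_S M_nz[of g] by auto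


abbreviation "M \<equiv> mingens S"
abbreviation "e \<equiv> mult S"

lemma indic_sum: "x \<in> M \<Longrightarrow> (\<Sum>g\<in>M. (if g = x then 1 else 0) * g) = x"
  using M_finite by (simp add: if_distrib[of "\<lambda>t. t * _"] sum.delta cong: if_cong)

lemma indic_sum1: "x \<in> M \<Longrightarrow> (\<Sum>g\<in>M. (if g = x then 1 else 0::nat)) = 1"
  using M_finite by simp

lemma gen: "x \<in> S \<Longrightarrow> \<exists>c. (\<Sum>g\<in>M. c g * g) = x"
proof (induction x rule: less_induct)
  case (less x)
  show ?case
  proof (cases "x = 0")
    case True then show ?thesis by (intro exI[of _ "\<lambda>_. 0"]) simp
  next
    case False
    show ?thesis
    proof (cases "x \<in> M")
      case True then show ?thesis by (intro exI[of _ "\<lambda>g. if g = x then 1 else 0"]) (rule indic_sum[OF True])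
    next
      case nM: False
      then obtain y z where yz: "y \<in> S" "z \<in> S" "y \<noteq> 0" "z \<noteq> 0" "x = y + z"
        using less.prems False unfolding mingens_def by blast
      obtain c1 where "(\<Sum>g\<in>M. c1 g * g) = y" using less.IH[of y] yz by auto
      moreover obtain c2 where "(\<Sum>g\<in>M. c2 g * g) = z" using less.IH[of z] yz by auto
      ultimately have "(\<Sum>g\<in>M. (c1 g + c2 g) * g) = x"
        using yz by (simp add: distrib_right sum.distrib)
      then show ?thesis by (intro exI[of _ "\<lambda>g. c1 g + c2 g"])
    qed
  qed
qed

lemma mult_in: "x \<in> S \<Longrightarrow> k * x \<in> S"
  by (induction k) (auto simp: zero_in add_in)

lemma sum_in: "(\<Sum>g\<in>M. c g * g) \<in> S"
proof -
  have "\<And>A. finite A \<Longrightarrow> A \<subseteq> S \<Longrightarrow> (\<Sum>g\<in>A. c g * g) \<in> S"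
  proof -
    fix A :: "nat set" assume "finite A" "A \<subseteq> S"
    then show "(\<Sum>g\<in>A. c g * g) \<in> S"
      by (induction A rule: finite_induct) (auto simp: zero_in add_in mult_in)
  qed
  then show ?thesis using M_finite M_S by blast
qed

lemma ordset_fin: "finite {\<Sum>g\<in>M. c g | c. (\<Sum>g\<in>M. c g * g) = n}"
proof -
  have "{\<Sum>g\<in>M. c g | c. (\<Sum>g\<in>M. c g * g) = n} \<subseteq> {..n}"
  proof
    fix x assume "x \<in> {\<Sum>g\<in>M. c g | c. (\<Sum>g\<in>M. c g * g) = n}"
    then obtain c where "x = (\<Sum>g\<in>M. c g)" "(\<Sum>g\<in>M. c g * g) = n" by blast
    moreover have "(\<Sum>g\<in>M. c g) \<le> (\<Sum>g\<in>M. c g * g)"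
      by (rule sum_mono) (use M_nz in \<open>auto simp: Suc_le_eq\<close>)
    ultimately show "x \<in> {..n}" by simp
  qed
  then show ?thesis using finite_subset by blast
qed

lemma ord_ge: "(\<Sum>g\<in>M. c g * g) = n \<Longrightarrow> (\<Sum>g\<in>M. c g) \<le> ord_sg n S"
  unfolding ord_sg_def by (rule Max_ge[OF ordset_fin]) blast

lemma ord_att: "n \<in> S \<Longrightarrow> \<exists>c. (\<Sum>g\<in>M. c g * g) = n \<and> (\<Sum>g\<in>M. c g) = ord_sg n S"
proof -
  assume "n \<in> S"
  then obtain c where "(\<Sum>g\<in>M. c g * g) = n" using gen by blast
  then have ne: "{\<Sum>g\<in>M. c g | c. (\<Sum>g\<in>M. c g * g) = n} \<noteq> {}" by blast
  have "ord_sg n S \<in> {\<Sum>g\<in>M. c g | c. (\<Sum>g\<in>M. c g * g) = n}"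
    unfolding ord_sg_def by (rule Max_in[OF ordset_fin ne])
  then show ?thesis by auto
qed

lemma ord_le: "n \<in> S \<Longrightarrow> ord_sg n S * e \<le> n"
proof -
  assume "n \<in> S"
  then obtain c where c: "(\<Sum>g\<in>M. c g * g) = n" "(\<Sum>g\<in>M. c g) = ord_sg n S" using ord_att by blast
  have "(\<Sum>g\<in>M. c g) * e = (\<Sum>g\<in>M. c g * e)" by (simp add: sum_distrib_right)
  also have "\<dots> \<le> (\<Sum>g\<in>M. c g * g)" by (rule sum_mono) (use e_le in auto)
  finally show ?thesis using c by simp
qed

lemma decomp: "n \<in> S \<Longrightarrow> \<exists>w\<in>apery S e. \<exists>m. n = w + m * e"
proof (induction n rule: less_induct)
  case (less n)
  show ?case
  proof (cases "e \<le> n \<and> n - e \<in> S")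
    case True
    then obtain w m where "w \<in> apery S e" "n - e = w + m * e" using less.IH[of "n - e"] e_pos by auto
    then have "n = w + Suc m * e" using True by (simp only: mult_Suc) arith
    then show ?thesis using \<open>w \<in> apery S e\<close> by blast
  next
    case False
    then have "n \<in> apery S e" using less.prems by (simp add: apery_def)
    then show ?thesis by (intro bexI[of _ n] exI[of _ 0]) auto
  qed
qed

lemma ap_S: "w \<in> apery S e \<Longrightarrow> w \<in> S" by (simp add: apery_def)

lemma ap_uniq: "w \<in> apery S e \<Longrightarrow> w' \<in> apery S e \<Longrightarrow> w mod e = w' mod e \<Longrightarrow> w = w'"
proof -
  have main: "w = w'" if "w \<in> apery S e" "w' \<in> apery S e" "w mod e = w' mod e" "w \<le> w'" for w w'
  proof (rule ccontr)
    assume "w \<noteq> w'"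
    have "e dvd (w' - w)" using mod_eq_dvd_iff_nat[OF that(4), of e] that(3) by simp
    then obtain k where k: "w' - w = e * k" by blast
    have "k \<noteq> 0"
    proof
      assume "k = 0" then have "w' - w = 0" using k by simp
      then show False using \<open>w \<noteq> w'\<close> that(4) by simp
    qed
    then obtain k' where "k = Suc k'" using not0_implies_Suc by blast
    then have "w' = w + e * k' + e" using k that(4) by simp
    moreover have "w + e * k' \<in> S" using ap_S[OF that(1)] mult_in[OF e_S] add_in by (simp add: mult.commute)
    ultimately show False using that(2) by (simp add: apery_def)
  qed
  assume "w \<in> apery S e" "w' \<in> apery S e" "w mod e = w' mod e"
  then show "w = w'" using main[of w w'] main[of w' w] by linarith
qed

lemma ap_ex: "r < e \<Longrightarrow> \<exists>w\<in>apery S e. w mod e = r"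
proof -
  assume r: "r < e"
  obtain N where N: "\<forall>n\<ge>N. n \<in> S" using cofinite by blast
  have "N * 1 \<le> N * e" using e_pos by (intro mult_le_mono2) simp
  then have "N \<le> r + N * e" by linarith
  then have "r + N * e \<in> S" using N by blast
  then obtain w m where w: "w \<in> apery S e" "r + N * e = w + m * e" using decomp by blast
  have "(r + N * e) mod e = (w + m * e) mod e" using w(2) by simp
  then have "w mod e = r" using r by simp
  then show ?thesis using w by blast
qed

lemma ap_bij: "bij_betw (\<lambda>w. w mod e) (apery S e) {..<e}"
  unfolding bij_betw_def inj_on_def
proof (intro conjI ballI impI)
  show "(\<lambda>w. w mod e) ` apery S e = {..<e}"
  proof
    show "(\<lambda>w. w mod e) ` apery S e \<subseteq> {..<e}" using e_pos by auto
    show "{..<e} \<subseteq> (\<lambda>w. w mod e) ` apery S e"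
    proof
      fix r assume "r \<in> {..<e}"
      then obtain w where "w \<in> apery S e" "w mod e = r" using ap_ex by auto
      then show "r \<in> (\<lambda>w. w mod e) ` apery S e" by blast
    qed
  qed
qed (rule ap_uniq)

lemma ap_fin: "finite (apery S e)" and ap_card: "card (apery S e) = e"
  using bij_betw_finite[OF ap_bij] bij_betw_same_card[OF ap_bij] by auto

lemma ord_add: "u \<in> S \<Longrightarrow> additive S \<Longrightarrow> ord_sg (u + m * e) S = ord_sg u S + m"
proof (induction m)
  case (Suc m)
  have "u + m * e \<in> S" using Suc.prems add_in mult_in e_S by blast
  then have "ord_sg (u + m * e + e) S = ord_sg (u + m * e) S + 1"
    using Suc.prems(2) unfolding additive_def by blast
  moreover have eq: "u + Suc m * e = u + m * e + e" by simp
  ultimately show ?case unfolding eq using Suc by simp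
qed simp


lemma gm_mult: "x \<in> gen_monoid A \<Longrightarrow> k * x \<in> gen_monoid A"
  by (induction k) (auto intro: gen_monoid.intros)

lemma gm_sum: "finite I \<Longrightarrow> (\<forall>i\<in>I. f i \<in> gen_monoid A) \<Longrightarrow> sum f I \<in> gen_monoid A"
  by (induction I rule: finite_induct) (auto intro: gen_monoid.intros)

lemma e_B: "e \<in> blowup S"
  unfolding blowup_def by (rule gen_monoid.base) simp

lemma B_rep: "b \<in> blowup S \<Longrightarrow> \<exists>c. b + (\<Sum>g\<in>M-{e}. c g) * e = (\<Sum>g\<in>M. c g * g)"
  unfolding blowup_def
proof (induction b rule: gen_monoid.induct)
  case zero
  then show ?case by (intro exI[of _ "\<lambda>_. 0"]) simp
next
  case (base a)
  show ?case
  proof (cases "a = e")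
    case True
    have "(\<Sum>g\<in>M-{e}. (if g = e then 1 else 0::nat)) = 0" by simp
    then show ?thesis using True indic_sum[OF e_M]
      by (intro exI[of _ "\<lambda>g. if g = e then 1 else 0"]) simp
  next
    case False
    then obtain a' where a': "a' \<in> M" "a' \<noteq> e" "a = a' - e" using base by auto
    have "(\<Sum>g\<in>M-{e}. (if g = a' then 1 else 0::nat)) = 1" using a' M_finite by simp
    moreover have "a' - e + e = a'" using e_le[OF a'(1)] by simp
    ultimately show ?thesis using a' indic_sum[OF a'(1)]
      by (intro exI[of _ "\<lambda>g. if g = a' then 1 else 0"]) simp
  qed
next
  case (add x y)
  then obtain c1 c2 where "x + (\<Sum>g\<in>M-{e}. c1 g) * e = (\<Sum>g\<in>M. c1 g * g)"
    "y + (\<Sum>g\<in>M-{e}. c2 g) * e = (\<Sum>g\<in>M. c2 g * g)" by blast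
  then have "x + y + (\<Sum>g\<in>M-{e}. c1 g + c2 g) * e = (\<Sum>g\<in>M. (c1 g + c2 g) * g)"
    by (simp add: sum.distrib distrib_right algebra_simps)
  then show ?case by (intro exI[of _ "\<lambda>g. c1 g + c2 g"])
qed

lemma u_B: "w \<in> S \<Longrightarrow> w - ord_sg w S * e \<in> blowup S"
proof -
  assume "w \<in> S"
  then obtain c where c: "(\<Sum>g\<in>M. c g * g) = w" "(\<Sum>g\<in>M. c g) = ord_sg w S" using ord_att by blast
  have "w - ord_sg w S * e = (\<Sum>g\<in>M. c g * g) - (\<Sum>g\<in>M. c g * e)"
    using c by (simp add: sum_distrib_right[symmetric])
  also have "\<dots> = (\<Sum>g\<in>M. c g * g - c g * e)"
    by (rule sum_subtractf_nat[symmetric]) (use e_le in auto)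
  also have "\<dots> = (\<Sum>g\<in>M. c g * (g - e))" by (simp add: diff_mult_distrib2)
  also have "\<dots> \<in> blowup S"
    unfolding blowup_def
  proof (rule gm_sum[OF M_finite], intro ballI)
    fix g assume g: "g \<in> M"
    show "c g * (g - e) \<in> gen_monoid ({e} \<union> (\<lambda>a. a - e) ` (M - {e}))"
    proof (cases "g = e")
      case True then show ?thesis by (simp add: gen_monoid.zero)
    next
      case False
      then have "g - e \<in> gen_monoid ({e} \<union> (\<lambda>a. a - e) ` (M - {e}))"
        using g by (intro gen_monoid.base) auto
      then show ?thesis by (rule gm_mult)
    qed
  qed
  finally show ?thesis .
qed

lemma P1: "b \<in> blowup S \<Longrightarrow> additive S \<Longrightarrow> \<exists>w\<in>apery S e. b mod e = w mod e \<and> w - ord_sg w S * e \<le> b"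
proof -
  assume b: "b \<in> blowup S" and add: "additive S"
  obtain c where c: "b + (\<Sum>g\<in>M-{e}. c g) * e = (\<Sum>g\<in>M. c g * g)" using B_rep[OF b] by blast
  define n where "n = (\<Sum>g\<in>M. c g * g)"
  define k where "k = (\<Sum>g\<in>M-{e}. c g)"
  have nS: "n \<in> S" unfolding n_def by (rule sum_in)
  have "(\<Sum>g\<in>M. c g) = c e + k" unfolding k_def using M_finite e_M by (simp add: sum.remove)
  then have "c e + k \<le> ord_sg n S" using ord_ge[of c n] n_def by simp
  obtain w m where w: "w \<in> apery S e" "n = w + m * e" using decomp[OF nS] by blast
  have "ord_sg n S = ord_sg w S + m" using w ord_add[OF ap_S[OF w(1)] add] by simp
  then have "k \<le> ord_sg w S + m" using \<open>c e + k \<le> ord_sg n S\<close> by simp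
  then have "k * e \<le> (ord_sg w S + m) * e" by simp
  moreover have "b + k * e = w + m * e" using c w unfolding n_def k_def by simp
  moreover have "(ord_sg w S + m) * e = ord_sg w S * e + m * e" by (rule distrib_right)
  ultimately have "w \<le> b + ord_sg w S * e" by linarith
  then have "w - ord_sg w S * e \<le> b" by simp
  moreover have "b mod e = w mod e"
  proof -
    have "(b + k * e) mod e = (w + m * e) mod e" using \<open>b + k * e = w + m * e\<close> by simp
    then show ?thesis by simp
  qed
  ultimately show ?thesis using w by blast
qed


lemma cong_lt: "(a::nat) mod e = c mod e \<Longrightarrow> a < c \<Longrightarrow> \<exists>q. c = a + Suc q * e"
proof -
  assume h: "a mod e = c mod e" "a < c"
  then have "e dvd (c - a)" using mod_eq_dvd_iff_nat[of a c e] by simp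
  then obtain k where k: "c - a = e * k" by blast
  have "k \<noteq> 0"
  proof
    assume "k = 0" then have "c - a = 0" using k by simp
    then show False using h(2) by simp
  qed
  then obtain q where "k = Suc q" using not0_implies_Suc by blast
  then show ?thesis using k h(2) by (intro exI[of _ q]) (simp add: algebra_simps)
qed

lemma cong_le: "(a::nat) mod e = c mod e \<Longrightarrow> a \<le> c \<Longrightarrow> \<exists>q. c = a + q * e"
proof -
  assume h: "a mod e = c mod e" "a \<le> c"
  show ?thesis
  proof (cases "a = c")
    case True then show ?thesis by (intro exI[of _ 0]) simp
  next
    case False
    then obtain q where "c = a + Suc q * e" using cong_lt[OF h(1)] h(2) by force
    then show ?thesis by blast
  qed
qed

lemma main: "supersymmetric S \<Longrightarrow> symmetric_sg (blowup S)"
proof -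
  assume ss: "supersymmetric S"
  have add: "additive S" using ss by (simp add: supersymmetric_def)
  define u where "u w = w - ord_sg w S * e" for w
  define W where "W = apery_elt S (e - 1)"
  define U where "U = u W"
  let ?B = "blowup S"
  let ?Ap = "apery S e"
  have len: "length (sorted_list_of_set ?Ap) = e" using ap_card by simp
  have setl: "set (sorted_list_of_set ?Ap) = ?Ap" using ap_fin by simp
  have elt_in: "apery_elt S i \<in> ?Ap" if "i < e" for i
    using that len setl nth_mem[of i "sorted_list_of_set ?Ap"] unfolding apery_elt_def by simp
  have WAp: "W \<in> ?Ap" unfolding W_def using elt_in e_pos by simp
  have uw: "u w + ord_sg w S * e = w" if "w \<in> ?Ap" for w
    using ord_le[OF ap_S[OF that]] unfolding u_def by simp
  have umod: "u w mod e = w mod e" if "w \<in> ?Ap" for w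
  proof -
    have "(u w + ord_sg w S * e) mod e = u w mod e" by simp
    then show ?thesis using uw[OF that] by simp
  qed
  have P3: "\<exists>w'\<in>?Ap. u w + u w' = U" if w: "w \<in> ?Ap" for w
  proof -
    obtain i where i: "i < e" "apery_elt S i = w"
      using w len setl unfolding apery_elt_def by (metis in_set_conv_nth)
    define j where "j = e - 1 - i"
    have ij: "i + j = e - 1" using i unfolding j_def by simp
    have jAp: "apery_elt S j \<in> ?Ap" using elt_in j_def e_pos by simp
    from ss ij have h: "w + apery_elt S j = W"
      "ord_sg w S + ord_sg (apery_elt S j) S = ord_sg W S"
      unfolding supersymmetric_def W_def using i by auto
    have oe: "ord_sg W S * e = ord_sg w S * e + ord_sg (apery_elt S j) S * e"
      using h(2) by (metis distrib_right)
    have "u w + u (apery_elt S j) = U"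
      using uw[OF w] uw[OF jAp] uw[OF WAp] h(1) oe unfolding U_def by linarith
    then show ?thesis using jAp by blast
  qed
  have ule: "u w \<le> U" if "w \<in> ?Ap" for w using P3[OF that] by auto
  have uB: "u w \<in> ?B" if "w \<in> ?Ap" for w using u_B[OF ap_S[OF that]] unfolding u_def .
  have char: "n \<in> ?B \<longleftrightarrow> u w \<le> n" if w: "w \<in> ?Ap" and nm: "n mod e = w mod e" for w n
  proof
    assume "n \<in> ?B"
    then obtain w2 where w2: "w2 \<in> ?Ap" "n mod e = w2 mod e" "w2 - ord_sg w2 S * e \<le> n"
      using P1 add by blast
    have "w2 = w" using ap_uniq[OF w2(1) w] w2(2) nm by simp
    then show "u w \<le> n" using w2(3) unfolding u_def by simp
  next
    assume le: "u w \<le> n"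
    have "u w mod e = n mod e" using umod[OF w] nm by simp
    then obtain q where "n = u w + q * e" using cong_le le by blast
    then show "n \<in> ?B" using uB[OF w] gm_mult[OF e_B[unfolded blowup_def]]
      unfolding blowup_def by (simp add: gen_monoid.add)
  qed
  have res: "\<exists>w\<in>?Ap. n mod e = w mod e" for n
  proof -
    obtain w where "w \<in> ?Ap" "w mod e = n mod e" using ap_ex[of "n mod e"] e_pos by auto
    then show ?thesis by (intro bexI[of _ w]) simp_all
  qed
  have Uge: "e - 1 \<le> U"
  proof -
    obtain w where w: "w \<in> ?Ap" "w mod e = e - 1" using ap_ex[of "e - 1"] e_pos by auto
    have "e - 1 \<le> u w" using umod[OF w(1)] w(2) mod_less_eq_dividend[of "u w" e] by simp
    then show ?thesis using ule[OF w(1)] by simp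
  qed
  have big: "n \<in> ?B" if "int n > int U - int e" for n
  proof -
    obtain w where w: "w \<in> ?Ap" "n mod e = w mod e" using res by blast
    have "u w \<le> n"
    proof (rule ccontr)
      assume "\<not> u w \<le> n"
      then obtain q where "u w = n + Suc q * e" using cong_lt[of n "u w"] w(2) umod[OF w(1)] by auto
      then show False using that ule[OF w(1)] by simp
    qed
    then show ?thesis using char[OF w] by simp
  qed
  have notF: "U - e \<notin> ?B" if "e \<le> U"
  proof -
    have m: "(U - e) mod e = W mod e"
      using le_mod_geq[OF that] umod[OF WAp] unfolding U_def by simp
    have "\<not> u W \<le> U - e" using that e_pos unfolding U_def by simp
    then show ?thesis using char[OF WAp m] by simp
  qed
  define F where "F = int U - int e"
  have frob: "frobenius ?B = F"
  proof (cases "UNIV - ?B = {}")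
    case True
    then have "\<not> e \<le> U" using notF by auto
    then show ?thesis using Uge True unfolding frobenius_def F_def by simp
  next
    case False
    have sub: "UNIV - ?B \<subseteq> {..U}" using big by force
    obtain x where x: "x \<notin> ?B" using False by blast
    then have "e \<le> U" using big by force
    have "Max (UNIV - ?B) = U - e"
    proof (rule Max_eqI)
      show "finite (UNIV - ?B)" using sub finite_subset by blast
      show "U - e \<in> UNIV - ?B" using notF[OF \<open>e \<le> U\<close>] by simp
      fix y assume "y \<in> UNIV - ?B"
      then show "y \<le> U - e" using big by force
    qed
    then show ?thesis using False \<open>e \<le> U\<close> unfolding frobenius_def F_def by simp
  qed
  show ?thesis
    unfolding symmetric_sg_def frob
  proof (intro allI impI)
    fix x y :: int assume xy: "x + y = F"
    show "int_mem x ?B \<longleftrightarrow> \<not> int_mem y ?B"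
    proof
      assume "int_mem x ?B"
      show "\<not> int_mem y ?B"
      proof
        assume "int_mem y ?B"
        then have "nat x + nat y \<in> ?B" using \<open>int_mem x ?B\<close>
          unfolding int_mem_def blowup_def by (simp add: gen_monoid.add)
        moreover have "e \<le> U" "nat x + nat y = U - e"
          using xy \<open>int_mem x ?B\<close> \<open>int_mem y ?B\<close> unfolding int_mem_def F_def by auto
        ultimately show False using notF by simp
      qed
    next
      assume ny: "\<not> int_mem y ?B"
      show "int_mem x ?B"
      proof (rule ccontr)
        assume nx: "\<not> int_mem x ?B"
        have Fge: "F \<ge> -1" using Uge e_pos unfolding F_def by simp
        show False
        proof (cases "x < 0 \<or> y < 0")
          case True
          then show False
          proof
            assume "x < 0"
            then have "int (nat y) > int U - int e" "y \<ge> 0" using xy Fge unfolding F_def by auto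
            then show False using big ny unfolding int_mem_def by auto
          next
            assume "y < 0"
            then have "int (nat x) > int U - int e" "x \<ge> 0" using xy Fge unfolding F_def by auto
            then show False using big nx unfolding int_mem_def by auto
          qed
        next
          case False
          define a where "a = nat x"
          define b where "b = nat y"
          have aB: "a \<notin> ?B" and bB: "b \<notin> ?B" using nx ny False unfolding a_def b_def int_mem_def by auto
          have ab: "a + b + e = U" using xy False unfolding a_def b_def F_def by auto
          obtain w where w: "w \<in> ?Ap" "a mod e = w mod e" using res by blast
          have "\<not> u w \<le> a" using char[OF w] aB by simp
          then obtain q where q: "u w = a + Suc q * e" using cong_lt[of a "u w"] w(2) umod[OF w(1)] by auto
          obtain w' where w': "w' \<in> ?Ap" "u w + u w' = U" using P3[OF w(1)] by blast
          have bq: "b = u w' + q * e" using ab q w'(2) by simp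
          have "b mod e = w' mod e" using bq umod[OF w'(1)] by simp
          then have "b \<in> ?B" using char[OF w'(1)] bq by simp
          then show False using bB by simp
        qed
      qed
    qed
  qed
qed

end

theorem lemma4p11:
  assumes "numerical_semigroup S" and "supersymmetric S"
  shows "symmetric_sg (blowup S)"
  using ns.main[OF ns.intro[OF assms(1)] assms(2)] .

end
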